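(* Let $\mathbb{P}$ be a class of closed formulas that is closed under conjunction. Then every safety problem provable in $\mathbf{FI}^{\mathbb{P}}$ is provable in $\mathbf{F}^{\mathbb{P}}$.
   Context: A first-order vocabulary $\Sigma$ consists of constant, function and relation symbols; $\Sigma'=\{a' : a\in\Sigma\}$ is a disjoint copy, and for a formula $\varphi$ over $\Sigma$, $\varphi'$ denotes $\varphi$ with every symbol replaced by its primed copy. A safety problem is a triple $(\iota,\tau,\beta)$, where $\iota,\beta$ are closed formulas over $\Sigma$ and $\tau$ is a closed formula over $\Sigma\uplus\Sigma'$. $A\Rightarrow B$ means the implication $A\to B$ is valid. Proofs: a proof of $\Pi$ in a system is a finite tree whose nodes are safety problems, whose root is $\Pi$, and in which each node together with its children is an instance of one of the system's inference rules, with side conditions valid. Rules ($\varphi$ ranges over closed formulas over $\Sigma$): (Ind): no premises; conclusion $(\iota,\tau,\neg\varphi)$; side conditions $\iota\Rightarrow\varphi$ and $\varphi\wedge\tau\Rightarrow\varphi'$. (Cons): premise $(\iota,\tau,\neg\varphi)$; conclusion $(\iota,\tau,\beta)$; side condition $\varphi\Rightarrow\neg\beta$. (Inc): premises $(\iota,\tau,\neg\varphi)$ and $(\iota\wedge\varphi,\ \tau\wedge\varphi\wedge\varphi',\ \beta\wedge\varphi)$; conclusion $(\iota,\tau,\beta)$. $\mathbf{F}$ consists of (Ind) and (Cons); $\mathbf{FI}$ consists of (Ind), (Cons), (Inc). For a class of closed formulas $\mathbb{P}$, $\mathbf{F}^{\mathbb{P}}$ and $\mathbf{FI}^{\mathbb{P}}$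 restrict applications of (Ind) to $\varphi\in\mathbb{P}$. *)

theory Defs
  imports Main
begin

text \<open>Function/constant symbols and relation symbols are drawn from a symbol type 'f
  (constants are 0-ary function symbols; equality is built in).\<close>

datatype 'f trm = Var nat | Fn 'f "'f trm list"

datatype 'f fm =
    Bot
  | Atom 'f "'f trm list"
  | Eq "'f trm" "'f trm"
  | Neg "'f fm"
  | Conj "'f fm" "'f fm"
  | Disj "'f fm" "'f fm"
  | Imp "'f fm" "'f fm"
  | Forall nat "'f fm"
  | Exists nat "'f fm"

primrec fvt :: "'f trm \<Rightarrow> nat set" where
  "fvt (Var n) = {n}"
| "fvt (Fn f ts) = \<Union> (set (map fvt ts))"

primrec fv :: "'f fm \<Rightarrow> nat set" where
  "fv Bot = {}"
| "fv (Atom r ts) = \<Union> (set (map fvt ts))"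
| "fv (Eq s t) = fvt s \<union> fvt t"
| "fv (Neg p) = fv p"
| "fv (Conj p q) = fv p \<union> fv q"
| "fv (Disj p q) = fv p \<union> fv q"
| "fv (Imp p q) = fv p \<union> fv q"
| "fv (Forall x p) = fv p - {x}"
| "fv (Exists x p) = fv p - {x}"

definition closed :: "'f fm \<Rightarrow> bool" where
  "closed p \<longleftrightarrow> fv p = {}"

primrec evalt :: "('f \<Rightarrow> 'u list \<Rightarrow> 'u) \<Rightarrow> (nat \<Rightarrow> 'u) \<Rightarrow> 'f trm \<Rightarrow> 'u" where
  "evalt F e (Var n) = e n"
| "evalt F e (Fn f ts) = F f (map (evalt F e) ts)"

primrec eval :: "'u set \<Rightarrow> ('f \<Rightarrow> 'u list \<Rightarrow> 'u) \<Rightarrow> ('f \<Rightarrow> 'u list \<Rightarrow> bool)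
                  \<Rightarrow> (nat \<Rightarrow> 'u) \<Rightarrow> 'f fm \<Rightarrow> bool" where
  "eval D F R e Bot = False"
| "eval D F R e (Atom r ts) = R r (map (evalt F e) ts)"
| "eval D F R e (Eq s t) = (evalt F e s = evalt F e t)"
| "eval D F R e (Neg p) = (\<not> eval D F R e p)"
| "eval D F R e (Conj p q) = (eval D F R e p \<and> eval D F R e q)"
| "eval D F R e (Disj p q) = (eval D F R e p \<or> eval D F R e q)"
| "eval D F R e (Imp p q) = (eval D F R e p \<longrightarrow> eval D F R e q)"
| "eval D F R e (Forall x p) = (\<forall>a\<in>D. eval D F R (e(x := a)) p)"
| "eval D F R e (Exists x p) = (\<exists>a\<in>D. eval D F R (e(x := a)) p)"

definition is_structure :: "'u set \<Rightarrow> ('f \<Rightarrow> 'u list \<Rightarrow> 'u) \<Rightarrow> bool" where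
  "is_structure D F \<longleftrightarrow> D \<noteq> {} \<and> (\<forall>f args. set args \<subseteq> D \<longrightarrow> F f args \<in> D)"

text \<open>Validity: truth in every structure (domain a nonempty subset of nat) under every
  assignment. By downward Loewenheim--Skolem this coincides with first-order validity.\<close>
definition valid :: "'f fm \<Rightarrow> bool" where
  "valid p \<longleftrightarrow> (\<forall>(D::nat set) F R e. is_structure D F \<longrightarrow> range e \<subseteq> D \<longrightarrow> eval D F R e p)"

text \<open>The vocabulary \<Sigma> is the symbol type 's; \<Sigma> \<uplus> \<Sigma>' is 's psym.\<close>
datatype 's psym = Cur 's | Nxt 's

fun prime_sym :: "'s psym \<Rightarrow> 's psym" where
  "prime_sym (Cur s) = Nxt s"
| "prime_sym (Nxt s) = Nxt s"

definition prime :: "'s psym fm \<Rightarrow> 's psym fm" where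
  "prime p = map_fm prime_sym p"

definition over_Sigma :: "'s psym fm \<Rightarrow> bool" where
  "over_Sigma p \<longleftrightarrow> set_fm p \<subseteq> range Cur"

definition closed_Sigma :: "'s psym fm \<Rightarrow> bool" where
  "closed_Sigma p \<longleftrightarrow> closed p \<and> over_Sigma p"

definition safety_problem :: "'s psym fm \<Rightarrow> 's psym fm \<Rightarrow> 's psym fm \<Rightarrow> bool" where
  "safety_problem \<iota> \<tau> \<beta> \<longleftrightarrow> closed_Sigma \<iota> \<and> closed \<tau> \<and> closed_Sigma \<beta>"

inductive provable_F :: "'s psym fm set \<Rightarrow> 's psym fm \<Rightarrow> 's psym fm \<Rightarrow> 's psym fm \<Rightarrow> bool"
  for P where
  Ind: "\<lbrakk> safety_problem \<iota> \<tau> (Neg \<phi>); closed_Sigma \<phi>; \<phi> \<in> P;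
          valid (Imp \<iota> \<phi>); valid (Imp (Conj \<phi> \<tau>) (prime \<phi>)) \<rbrakk>
        \<Longrightarrow> provable_F P \<iota> \<tau> (Neg \<phi>)"
| Cons: "\<lbrakk> safety_problem \<iota> \<tau> \<beta>; closed_Sigma \<phi>; provable_F P \<iota> \<tau> (Neg \<phi>);
          valid (Imp \<phi> (Neg \<beta>)) \<rbrakk>
        \<Longrightarrow> provable_F P \<iota> \<tau> \<beta>"

inductive provable_FI :: "'s psym fm set \<Rightarrow> 's psym fm \<Rightarrow> 's psym fm \<Rightarrow> 's psym fm \<Rightarrow> bool"
  for P where
  Ind: "\<lbrakk> safety_problem \<iota> \<tau> (Neg \<phi>); closed_Sigma \<phi>; \<phi> \<in> P;
          valid (Imp \<iota> \<phi>); valid (Imp (Conj \<phi> \<tau>) (prime \<phi>)) \<rbrakk>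
        \<Longrightarrow> provable_FI P \<iota> \<tau> (Neg \<phi>)"
| Cons: "\<lbrakk> safety_problem \<iota> \<tau> \<beta>; closed_Sigma \<phi>; provable_FI P \<iota> \<tau> (Neg \<phi>);
          valid (Imp \<phi> (Neg \<beta>)) \<rbrakk>
        \<Longrightarrow> provable_FI P \<iota> \<tau> \<beta>"
| Inc: "\<lbrakk> safety_problem \<iota> \<tau> \<beta>; closed_Sigma \<phi>; provable_FI P \<iota> \<tau> (Neg \<phi>);
          provable_FI P (Conj \<iota> \<phi>) (Conj \<tau> (Conj \<phi> (prime \<phi>))) (Conj \<beta> \<phi>) \<rbrakk>
        \<Longrightarrow> provable_FI P \<iota> \<tau> \<beta>"

end

theory Submission
  imports Defs
begin

lemma evalt_map: "evalt F e (map_trm g t) = evalt (\<lambda>f. F (g f)) e t"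
  by (induction t) (auto cong: map_cong)

lemma eval_map: "eval D F R e (map_fm g p) = eval D (\<lambda>f. F (g f)) (\<lambda>r. R (g r)) e p"
  by (induction p arbitrary: e) (simp_all add: evalt_map comp_def cong: map_cong)

lemma valid_map:
  fixes p :: "'a fm" and g :: "'a \<Rightarrow> 'b"
  shows "valid p \<Longrightarrow> valid (map_fm g p)"
  unfolding valid_def eval_map
proof (intro allI impI)
  fix D :: "nat set" and F :: "'b \<Rightarrow> nat list \<Rightarrow> nat" and R :: "'b \<Rightarrow> nat list \<Rightarrow> bool" and e :: "nat \<Rightarrow> nat"
  assume v: "\<forall>(D::nat set) F R e. is_structure D F \<longrightarrow> range e \<subseteq> D \<longrightarrow> eval D F R e p"
    and s: "is_structure D F" and r: "range e \<subseteq> D"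
  have "is_structure D (\<lambda>f. F (g f))" using s unfolding is_structure_def by simp
  then show "eval D (\<lambda>f. F (g f)) (\<lambda>r. R (g r)) e p" using v r by simp
qed

lemma valid_prime: "valid p \<Longrightarrow> valid (prime p)"
  unfolding prime_def by (rule valid_map)

lemma validD: "valid p \<Longrightarrow> is_structure (D::nat set) F \<Longrightarrow> range e \<subseteq> D \<Longrightarrow> eval D F R e p"
  unfolding valid_def by simp

lemma validI: "(\<And>D F R e. is_structure D F \<Longrightarrow> range e \<subseteq> (D::nat set) \<Longrightarrow> eval D F R e p) \<Longrightarrow> valid p"
  unfolding valid_def by simp

lemma closed_Sigma_Neg: "closed_Sigma (Neg p) = closed_Sigma p"
  unfolding closed_Sigma_def closed_def over_Sigma_def by simp

lemma F_char:
  assumes "provable_F P \<iota> \<tau> \<beta>"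
  shows "safety_problem \<iota> \<tau> \<beta> \<and> (\<exists>\<psi>\<in>P. closed_Sigma \<psi> \<and> valid (Imp \<iota> \<psi>)
     \<and> valid (Imp (Conj \<psi> \<tau>) (prime \<psi>)) \<and> valid (Imp \<psi> (Neg \<beta>)))"
  using assms
proof (induction rule: provable_F.induct)
  case (Ind \<iota> \<tau> \<phi>)
  have "valid (Imp \<phi> (Neg (Neg \<phi>)))" by (rule validI) simp
  with Ind show ?case by blast
next
  case (Cons \<iota> \<tau> \<beta> \<phi>)
  then obtain \<psi> where "\<psi>\<in>P" "closed_Sigma \<psi>" "valid (Imp \<iota> \<psi>)"
     "valid (Imp (Conj \<psi> \<tau>) (prime \<psi>))" and h: "valid (Imp \<psi> (Neg (Neg \<phi>)))" by blast
  moreover have "valid (Imp \<psi> (Neg \<beta>))"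
  proof (rule validI, goal_cases)
    case (1 D F R e)
    note s = 1
    show "eval D F R e (Imp \<psi> (Neg \<beta>))"
      using validD[OF h s, of R] validD[OF Cons.hyps(4) s, of R] by simp
  qed
  ultimately show ?case using Cons by blast
qed

lemma F_intro:
  assumes "safety_problem \<iota> \<tau> \<beta>" "\<psi>\<in>P" "closed_Sigma \<psi>" "valid (Imp \<iota> \<psi>)"
     "valid (Imp (Conj \<psi> \<tau>) (prime \<psi>))" "valid (Imp \<psi> (Neg \<beta>))"
  shows "provable_F P \<iota> \<tau> \<beta>"
proof -
  have "safety_problem \<iota> \<tau> (Neg \<psi>)" using assms(1,3)
    by (simp add: safety_problem_def closed_Sigma_Neg)
  then have "provable_F P \<iota> \<tau> (Neg \<psi>)" using assms by (rule_tac provable_F.Ind) auto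
  then show ?thesis using assms by (rule_tac provable_F.Cons[where \<phi>=\<psi>]) auto
qed

theorem corollary4p8:
  fixes P :: "'s psym fm set"
  assumes "\<forall>\<phi>\<in>P. closed_Sigma \<phi>"
    and "\<forall>\<phi>\<in>P. \<forall>\<psi>\<in>P. Conj \<phi> \<psi> \<in> P"
    and "provable_FI P \<iota> \<tau> \<beta>"
  shows "provable_F P \<iota> \<tau> \<beta>"
  using assms(3)
proof (induction rule: provable_FI.induct)
  case (Ind \<iota> \<tau> \<phi>)
  then show ?case by (rule_tac provable_F.Ind) auto
next
  case (Cons \<iota> \<tau> \<beta> \<phi>)
  then show ?case by (rule_tac provable_F.Cons[where \<phi>=\<phi>]) auto
next
  case (Inc \<iota> \<tau> \<beta> \<phi>)
  from F_char[OF Inc.IH(1)] obtain \<psi>1 where a: "\<psi>1\<in>P" "valid (Imp \<iota> \<psi>1)"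
     "valid (Imp (Conj \<psi>1 \<tau>) (prime \<psi>1))" "valid (Imp \<psi>1 (Neg (Neg \<phi>)))" by blast
  from F_char[OF Inc.IH(2)] obtain \<psi>2 where b: "\<psi>2\<in>P" "valid (Imp (Conj \<iota> \<phi>) \<psi>2)"
     "valid (Imp (Conj \<psi>2 (Conj \<tau> (Conj \<phi> (prime \<phi>)))) (prime \<psi>2))"
     "valid (Imp \<psi>2 (Neg (Conj \<beta> \<phi>)))" by blast
  have a4: "valid (Imp \<psi>1 \<phi>)"
  proof (rule validI, goal_cases)
    case (1 D F R e)
    note s = 1
    show "eval D F R e (Imp \<psi>1 \<phi>)" using validD[OF a(4) s, of R] by simp
  qed
  have c: "valid (Imp (prime \<psi>1) (prime \<phi>))"
    using valid_prime[OF a4] by (simp add: prime_def)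
  have pc: "prime (Conj \<psi>1 \<psi>2) = Conj (prime \<psi>1) (prime \<psi>2)" by (simp add: prime_def)
  show ?case
  proof (rule F_intro[where \<psi> = "Conj \<psi>1 \<psi>2"])
    show "safety_problem \<iota> \<tau> \<beta>" by fact
    show "Conj \<psi>1 \<psi>2 \<in> P" using assms(2) a(1) b(1) by blast
    then show "closed_Sigma (Conj \<psi>1 \<psi>2)" using assms(1) by blast
    show "valid (Imp \<iota> (Conj \<psi>1 \<psi>2))"
    proof (rule validI, goal_cases)
      case (1 D F R e)
      note s = 1
      show "eval D F R e (Imp \<iota> (Conj \<psi>1 \<psi>2))"
        using validD[OF a(2) s, of R] validD[OF a4 s, of R] validD[OF b(2) s, of R] by simp
    qed
    show "valid (Imp (Conj (Conj \<psi>1 \<psi>2) \<tau>) (prime (Conj \<psi>1 \<psi>2)))"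
      unfolding pc
    proof (rule validI, goal_cases)
      case (1 D F R e)
      note s = 1
      show "eval D F R e (Imp (Conj (Conj \<psi>1 \<psi>2) \<tau>) (Conj (prime \<psi>1) (prime \<psi>2)))"
        using validD[OF a(3) s, of R] validD[OF a4 s, of R] validD[OF b(3) s, of R]
          validD[OF c s, of R] by simp
    qed
    show "valid (Imp (Conj \<psi>1 \<psi>2) (Neg \<beta>))"
    proof (rule validI, goal_cases)
      case (1 D F R e)
      note s = 1
      show "eval D F R e (Imp (Conj \<psi>1 \<psi>2) (Neg \<beta>))"
        using validD[OF a4 s, of R] validD[OF b(4) s, of R] by auto
    qed
  qed
qed

end
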